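(* Let $X$ be a Frobenius semiring. (1) $2=4$ in $X$; consequently any $m,n\in\mathbb{N}$ with $m,n\ge2$ and of equal parity are equal in $X$. (2) If $X$ is upper-bound, then $2=3$ in $X$; consequently any $m,n\in\mathbb{N}_{\ge2}$ are equal in $X$.
   Context: A semiring $(X,+,0,\cdot)$: $(X,+,0)$ commutative monoid, $(X,\cdot)$ semigroup, distributivity, $0$ absorbing. A Frobenius semiring is a unital commutative semiring with $(x+y)^n=x^n+y^n$ for all $x,y\in X$, $n\ge1$. A natural number $n$ is identified with $1+\dots+1$ ($n$ times) in $X$. Intrinsic order: $a\le b$ iff $a+x=b$ for some $x$; upper-bound means this preorder is antisymmetric. *)

theory Defs
  imports Main
begin

text \<open>Semiring in the paper's sense (commutative additive monoid, multiplicative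
semigroup, distributive, 0 absorbing) = class comm_semiring_0 when commutative;
unital commutative = additionally comm_monoid_mult. We deliberately avoid
comm_semiring_1, which would add the extra axiom 0 \<noteq> 1.\<close>

fun natX :: "nat \<Rightarrow> 'a::{comm_semiring_0,comm_monoid_mult}" where
  "natX 0 = 0"
| "natX (Suc n) = natX n + 1"

definition frobenius :: "'a::{comm_semiring_0,comm_monoid_mult} itself \<Rightarrow> bool" where
  "frobenius _ \<longleftrightarrow> (\<forall>(x::'a) y (n::nat). n \<ge> 1 \<longrightarrow> (x + y) ^ n = x ^ n + y ^ n)"

definition intrinsic_le :: "'a::comm_monoid_add \<Rightarrow> 'a \<Rightarrow> bool" where
  "intrinsic_le a b \<longleftrightarrow> (\<exists>x. a + x = b)"

definition upper_bound :: "'a::comm_monoid_add itself \<Rightarrow> bool" where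
  "upper_bound _ \<longleftrightarrow> (\<forall>a b::'a. intrinsic_le a b \<longrightarrow> intrinsic_le b a \<longrightarrow> a = b)"

end

theory Submission
  imports Defs
begin

lemma natX_add: "(natX (a + k) :: 'a::{comm_semiring_0,comm_monoid_mult}) = natX a + natX k"
  by (induction k) (simp_all add: add.assoc)

lemma natX_red:
  assumes h: "(natX 2 :: 'a::{comm_semiring_0,comm_monoid_mult}) = natX 4"
  shows "m \<ge> 2 \<Longrightarrow> (natX m :: 'a) = natX (2 + m mod 2)"
proof (induction m rule: nat_less_induct)
  case (1 m)
  show ?case
  proof (cases "m \<ge> 4")
    case True
    have "(natX m :: 'a) = natX (m - 4) + natX 4" using natX_add[of "m-4" 4] True by simp
    also have "\<dots> = natX (m - 4) + natX 2" using h by simp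
    also have "\<dots> = natX (m - 4 + 2)" using natX_add[of "m-4" 2] by metis
    also have "\<dots> = natX (m - 2)" proof -
      have "m - 4 + 2 = m - 2" using True by simp
      then show ?thesis by simp
    qed
    also have "\<dots> = (natX (2 + (m-2) mod 2) :: 'a)" using 1 True by simp
    also have "(m-2) mod 2 = m mod 2" using True
      by (simp add: le_mod_geq)
    finally show ?thesis by simp
  next
    case False
    then have "m = 2 \<or> m = 3" using 1 by auto
    moreover have "(natX 2::'a) = natX (2 + 2 mod 2)" by simp
    moreover have "(natX 3::'a) = natX (2 + 3 mod 2)" by simp
    ultimately show ?thesis by metis
  qed
qed

theorem lemma3p3:
  fixes X :: "'a::{comm_semiring_0,comm_monoid_mult} itself"
  assumes "frobenius X"
  shows "((natX 2 :: 'a) = natX 4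
          \<and> (\<forall>m n. m \<ge> 2 \<longrightarrow> n \<ge> 2 \<longrightarrow> even m = even n \<longrightarrow> (natX m :: 'a) = natX n))
       \<and> (upper_bound X \<longrightarrow>
          (natX 2 :: 'a) = natX 3
          \<and> (\<forall>m n. m \<ge> 2 \<longrightarrow> n \<ge> 2 \<longrightarrow> (natX m :: 'a) = natX n))"
proof -
  have f: "((1::'a) + 1) ^ 2 = 1 ^ 2 + 1 ^ 2"
    using assms unfolding frobenius_def by (metis one_le_numeral)
  have n2: "(natX 2 :: 'a) = 1 + 1" by (simp add: numeral_2_eq_2)
  have n3: "(natX 3 :: 'a) = 1 + 1 + 1" by (simp add: numeral_3_eq_3)
  have n4: "(natX 4 :: 'a) = 1 + 1 + 1 + 1"
    by (simp add: eval_nat_numeral)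
  have "((1::'a) + 1) ^ 2 = 1 + 1 + 1 + 1"
    by (simp add: power2_eq_square distrib_left distrib_right add.assoc)
  hence h: "(natX 2 :: 'a) = natX 4" using f n2 n4 by simp
  have A: "\<forall>m n. m \<ge> 2 \<longrightarrow> n \<ge> 2 \<longrightarrow> even m = even n \<longrightarrow> (natX m :: 'a) = natX n"
  proof (intro allI impI)
    fix m n :: nat assume "m \<ge> 2" "n \<ge> 2" "even m = even n"
    then have "m mod 2 = n mod 2" by (metis odd_iff_mod_2_eq_one even_iff_mod_2_eq_zero)
    then show "(natX m :: 'a) = natX n"
      using natX_red[OF h, of m] natX_red[OF h, of n] \<open>m\<ge>2\<close> \<open>n\<ge>2\<close> by simp
  qed
  have B: "upper_bound X \<longrightarrow> (natX 2 :: 'a) = natX 3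
          \<and> (\<forall>m n. m \<ge> 2 \<longrightarrow> n \<ge> 2 \<longrightarrow> (natX m :: 'a) = natX n)"
  proof
    assume ub: "upper_bound X"
    have l1: "intrinsic_le (natX 2 :: 'a) (natX 3)" unfolding intrinsic_le_def
      using n2 n3 by metis
    have l2: "intrinsic_le (natX 3 :: 'a) (natX 2)" unfolding intrinsic_le_def
      using h n3 n4 by (metis add.assoc)
    have e23: "(natX 2 :: 'a) = natX 3" using ub l1 l2 unfolding upper_bound_def by blast
    have all: "m \<ge> 2 \<Longrightarrow> (natX m :: 'a) = natX 2" for m
    proof -
      assume "m \<ge> 2"
      then have "natX m = (natX (2 + m mod 2) :: 'a)" using natX_red[OF h] by blast
      moreover have "m mod 2 = 0 \<or> m mod 2 = 1" by auto
      ultimately show ?thesis using e23 by (auto simp: numeral_3_eq_3 numeral_2_eq_2)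
    qed
    show "(natX 2 :: 'a) = natX 3 \<and> (\<forall>m n. m \<ge> 2 \<longrightarrow> n \<ge> 2 \<longrightarrow> (natX m :: 'a) = natX n)"
      using e23 all by metis
  qed
  show ?thesis using h A B by blast
qed

end
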